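(* For $n\ge 1$, the graph $\mathcal{SP}_L(IS_n)$ is isomorphic to the intersection graph of the non-empty subsets of an $n$-element set, i.e. the simple graph whose vertices are the non-empty subsets of $\{1,\dots,n\}$, two distinct subsets being adjacent iff they intersect.
   Context: $IS_n$ is the set of all partial injective maps of an $n$-element set $X$, with composition written left to right ($\alpha\beta$ means first $\alpha$, then $\beta$); its zero is the empty map. For $a\in IS_n$, $S^1a=\{sa:s\in IS_n\}\cup\{a\}$. $\mathcal{P}_L(IS_n)$ is the simple graph on the non-empty partial injections with distinct $a,b$ adjacent iff $S^1a\cap S^1b$ contains a non-empty map. $L_a$ is the Green $\mathcal{L}$-class of $a$ ($a\,\mathcal{L}\,b$ iff $S^1a=S^1b$). $\mathcal{SP}_L(IS_n)$ is the simple graph with vertex set $\{L_a: a \text{ non-empty}\}$, distinct $L_a,L_b$ adjacent iff $a,b$ are adjacent in $\mathcal{P}_L(IS_n)$. *)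

theory Defs
  imports Main
begin

definition IS :: "nat \<Rightarrow> (nat \<Rightarrow> nat option) set" where
  "IS n = {a. dom a \<subseteq> {1..n} \<and> ran a \<subseteq> {1..n} \<and> inj_on a (dom a)}"

text \<open>Left-to-right composition: pcomp a b means first a, then b.\<close>
definition pcomp :: "(nat \<Rightarrow> nat option) \<Rightarrow> (nat \<Rightarrow> nat option) \<Rightarrow> (nat \<Rightarrow> nat option)" where
  "pcomp a b = b \<circ>\<^sub>m a"

definition S1 :: "nat \<Rightarrow> (nat \<Rightarrow> nat option) \<Rightarrow> (nat \<Rightarrow> nat option) set" where
  "S1 n a = {pcomp s a | s. s \<in> IS n} \<union> {a}"

definition PL_vertices :: "nat \<Rightarrow> (nat \<Rightarrow> nat option) set" where
  "PL_vertices n = IS n - {Map.empty}"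

definition PL_adj :: "nat \<Rightarrow> (nat \<Rightarrow> nat option) \<Rightarrow> (nat \<Rightarrow> nat option) \<Rightarrow> bool" where
  "PL_adj n a b \<longleftrightarrow> a \<noteq> b \<and> (\<exists>c \<in> S1 n a \<inter> S1 n b. c \<noteq> Map.empty)"

definition Lclass :: "nat \<Rightarrow> (nat \<Rightarrow> nat option) \<Rightarrow> (nat \<Rightarrow> nat option) set" where
  "Lclass n a = {b \<in> IS n. S1 n b = S1 n a}"

definition SPL_vertices :: "nat \<Rightarrow> (nat \<Rightarrow> nat option) set set" where
  "SPL_vertices n = {Lclass n a | a. a \<in> PL_vertices n}"

definition SPL_adj :: "nat \<Rightarrow> (nat \<Rightarrow> nat option) set \<Rightarrow> (nat \<Rightarrow> nat option) set \<Rightarrow> bool" where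
  "SPL_adj n C D \<longleftrightarrow> C \<noteq> D \<and>
     (\<exists>a \<in> PL_vertices n. \<exists>b \<in> PL_vertices n. C = Lclass n a \<and> D = Lclass n b \<and> PL_adj n a b)"

definition Int_vertices :: "nat \<Rightarrow> nat set set" where
  "Int_vertices n = {A. A \<subseteq> {1..n} \<and> A \<noteq> {}}"

definition Int_adj :: "nat set \<Rightarrow> nat set \<Rightarrow> bool" where
  "Int_adj A B \<longleftrightarrow> A \<noteq> B \<and> A \<inter> B \<noteq> {}"

definition graph_iso :: "'a set \<Rightarrow> ('a \<Rightarrow> 'a \<Rightarrow> bool) \<Rightarrow> 'b set \<Rightarrow> ('b \<Rightarrow> 'b \<Rightarrow> bool) \<Rightarrow> ('a \<Rightarrow> 'b) \<Rightarrow> bool" where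
  "graph_iso V E W F f \<longleftrightarrow> bij_betw f V W \<and> (\<forall>x\<in>V. \<forall>y\<in>V. E x y \<longleftrightarrow> F (f x) (f y))"

definition graphs_isomorphic :: "'a set \<Rightarrow> ('a \<Rightarrow> 'a \<Rightarrow> bool) \<Rightarrow> 'b set \<Rightarrow> ('b \<Rightarrow> 'b \<Rightarrow> bool) \<Rightarrow> bool" where
  "graphs_isomorphic V E W F \<longleftrightarrow> (\<exists>f. graph_iso V E W F f)"

end

theory Submission
  imports Defs
begin

lemma comp_IS:
  assumes a: "a \<in> IS n" and s: "s \<in> IS n"
  shows "pcomp s a \<in> IS n \<and> ran (pcomp s a) \<subseteq> ran a"
proof -
  have r: "ran (pcomp s a) \<subseteq> ran a"
    by (auto simp: pcomp_def ran_def map_comp_def split: option.splits)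
  have d: "dom (pcomp s a) \<subseteq> dom s"
    by (auto simp: pcomp_def dom_def map_comp_def split: option.splits)
  have i: "inj_on (pcomp s a) (dom (pcomp s a))"
  proof (rule inj_onI)
    fix x y assume x: "x \<in> dom (pcomp s a)" and y: "y \<in> dom (pcomp s a)"
      and e: "pcomp s a x = pcomp s a y"
    from x obtain u where u: "s x = Some u" "a u \<noteq> None"
      by (auto simp: pcomp_def map_comp_def split: option.splits)
    from y obtain v where v: "s y = Some v" "a v \<noteq> None"
      by (auto simp: pcomp_def map_comp_def split: option.splits)
    have "a u = a v" using e u v by (simp add: pcomp_def map_comp_def)
    hence "u = v" using a u v by (auto simp: IS_def inj_on_def dom_def)
    hence "s x = s y" using u v by simp
    thus "x = y" using s u v by (auto simp: IS_def inj_on_def dom_def)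
  qed
  have "dom (pcomp s a) \<subseteq> {1..n}" using d s unfolding IS_def by blast
  moreover have "ran (pcomp s a) \<subseteq> {1..n}" using r a unfolding IS_def by blast
  ultimately show ?thesis using i r unfolding IS_def by blast
qed

lemma S1_char:
  assumes a: "a \<in> IS n"
  shows "S1 n a = {b \<in> IS n. ran b \<subseteq> ran a}"
proof
  show "S1 n a \<subseteq> {b \<in> IS n. ran b \<subseteq> ran a}"
    using comp_IS[OF a] a by (auto simp: S1_def)
next
  show "{b \<in> IS n. ran b \<subseteq> ran a} \<subseteq> S1 n a"
  proof clarify
    fix b assume b: "b \<in> IS n" and rb: "ran b \<subseteq> ran a"
    define s where "s x = (case b x of None \<Rightarrow> None | Some y \<Rightarrow> Some (SOME z. a z = Some y))" for x
    have key: "b x = Some y \<Longrightarrow> a (SOME z. a z = Some y) = Some y" for x y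
    proof -
      assume "b x = Some y"
      hence "y \<in> ran a" using rb by (auto simp: ran_def)
      then obtain z where "a z = Some y" by (auto simp: ran_def)
      thus ?thesis by (rule someI)
    qed
    have eq: "pcomp s a = b"
    proof
      fix x show "pcomp s a x = b x"
        using key[of x] by (auto simp: pcomp_def map_comp_def s_def split: option.splits)
    qed
    have ds: "dom s = dom b" by (auto simp: s_def dom_def split: option.splits)
    have rs: "ran s \<subseteq> dom a"
    proof
      fix z assume "z \<in> ran s"
      then obtain x where "s x = Some z" by (auto simp: ran_def)
      then obtain y where "b x = Some y" "z = (SOME z. a z = Some y)"
        by (auto simp: s_def split: option.splits)
      thus "z \<in> dom a" using key by auto
    qed
    have is_: "inj_on s (dom s)"
    proof (rule inj_onI)
      fix x1 x2 assume "x1 \<in> dom s" "x2 \<in> dom s" and e: "s x1 = s x2"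
      then obtain y1 y2 where y: "b x1 = Some y1" "b x2 = Some y2"
        using ds by auto
      have "a (the (s x1)) = Some y1" using key[OF y(1)] y by (simp add: s_def)
      moreover have "a (the (s x2)) = Some y2" using key[OF y(2)] y by (simp add: s_def)
      ultimately have "b x1 = b x2" using e y by simp
      thus "x1 = x2" using b y by (auto simp: IS_def inj_on_def dom_def)
    qed
    have "s \<in> IS n" using ds rs is_ a b by (auto simp: IS_def)
    thus "b \<in> S1 n a" using eq unfolding S1_def by blast
  qed
qed

lemma Lclass_char:
  assumes a: "a \<in> IS n"
  shows "Lclass n a = {b \<in> IS n. ran b = ran a}"
proof -
  have "b \<in> IS n \<Longrightarrow> (S1 n b = S1 n a) = (ran b = ran a)" for b
  proof
    assume b: "b \<in> IS n" and e: "S1 n b = S1 n a"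
    have m: "x \<in> S1 n x" for x by (simp add: S1_def)
    have "b \<in> S1 n a" using e m[of b] by simp
    moreover have "a \<in> S1 n b" using e m[of a] by simp
    ultimately show "ran b = ran a" using S1_char[OF a] S1_char[OF b] by auto
  next
    assume "b \<in> IS n" "ran b = ran a"
    thus "S1 n b = S1 n a" using S1_char[OF a] S1_char[of b n] by simp
  qed
  thus ?thesis by (auto simp: Lclass_def)
qed

definition F :: "(nat \<Rightarrow> nat option) set \<Rightarrow> nat set" where
  "F C = \<Union> (ran ` C)"

lemma F_L: "a \<in> IS n \<Longrightarrow> F (Lclass n a) = ran a"
  by (auto simp: F_def Lclass_char)

lemma ran_nonempty: "a \<noteq> Map.empty \<Longrightarrow> ran a \<noteq> {}"
proof
  assume "a \<noteq> Map.empty" "ran a = {}"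
  then obtain x where "a x \<noteq> None" by (meson ext)
  then obtain y where "a x = Some y" by auto
  thus False using \<open>ran a = {}\<close> by (auto simp: ran_def)
qed

lemma L_eq: "a \<in> IS n \<Longrightarrow> b \<in> IS n \<Longrightarrow> (Lclass n a = Lclass n b) = (ran a = ran b)"
proof
  assume "a \<in> IS n" "b \<in> IS n" "Lclass n a = Lclass n b"
  hence "F (Lclass n a) = F (Lclass n b)" by simp
  thus "ran a = ran b" using F_L \<open>a \<in> IS n\<close> \<open>b \<in> IS n\<close> by simp
next
  assume "a \<in> IS n" "b \<in> IS n" "ran a = ran b"
  thus "Lclass n a = Lclass n b" by (simp add: Lclass_char)
qed

lemma single_IS: "x \<in> {1..n} \<Longrightarrow> [x \<mapsto> x] \<in> IS n"
  by (auto simp: IS_def)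

lemma PL_adj_char:
  assumes "a \<in> IS n" "b \<in> IS n"
  shows "PL_adj n a b = (a \<noteq> b \<and> ran a \<inter> ran b \<noteq> {})"
proof
  assume "PL_adj n a b"
  then obtain c where "a \<noteq> b" "c \<in> S1 n a" "c \<in> S1 n b" "c \<noteq> Map.empty"
    by (auto simp: PL_adj_def)
  thus "a \<noteq> b \<and> ran a \<inter> ran b \<noteq> {}"
    using S1_char[OF assms(1)] S1_char[OF assms(2)] ran_nonempty[of c] by auto
next
  assume h: "a \<noteq> b \<and> ran a \<inter> ran b \<noteq> {}"
  then obtain x where x: "x \<in> ran a" "x \<in> ran b" by auto
  hence "x \<in> {1..n}" using assms by (auto simp: IS_def)
  hence c: "[x \<mapsto> x] \<in> IS n" by (rule single_IS)
  have "[x \<mapsto> x] \<in> S1 n a" "[x \<mapsto> x] \<in> S1 n b"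
    using S1_char[OF assms(1)] S1_char[OF assms(2)] c x by auto
  thus "PL_adj n a b" using h unfolding PL_adj_def by (intro conjI bexI[of _ "[x \<mapsto> x]"]) auto
qed

theorem mainTheorem16:
  fixes n :: nat
  assumes "n \<ge> 1"
  shows "graphs_isomorphic (SPL_vertices n) (SPL_adj n) (Int_vertices n) Int_adj"
  unfolding graphs_isomorphic_def graph_iso_def
proof (intro exI conjI ballI)
  show "bij_betw F (SPL_vertices n) (Int_vertices n)"
  proof (rule bij_betw_imageI)
    show "inj_on F (SPL_vertices n)"
    proof (rule inj_onI)
      fix C D assume "C \<in> SPL_vertices n" "D \<in> SPL_vertices n" and e: "F C = F D"
      then obtain a b where "a \<in> IS n" "b \<in> IS n" "C = Lclass n a" "D = Lclass n b"
        by (auto simp: SPL_vertices_def PL_vertices_def)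
      thus "C = D" using e F_L[of a n] F_L[of b n] L_eq[of a n b] by simp
    qed
    show "F ` SPL_vertices n = Int_vertices n"
    proof
      show "F ` SPL_vertices n \<subseteq> Int_vertices n"
        by (auto simp: SPL_vertices_def PL_vertices_def F_L Int_vertices_def ran_nonempty)
          (auto simp: IS_def)
    next
      show "Int_vertices n \<subseteq> F ` SPL_vertices n"
      proof
        fix A assume A: "A \<in> Int_vertices n"
        define a where "a x = (if x \<in> A then Some x else None)" for x
        have ra: "ran a = A" by (auto simp: a_def ran_def split: if_splits)
        have aI: "a \<in> IS n" using A by (auto simp: a_def IS_def Int_vertices_def inj_on_def ra dom_def)
        have "a \<noteq> Map.empty" using ra A by (auto simp: Int_vertices_def)
        hence "Lclass n a \<in> SPL_vertices n" using aI by (auto simp: SPL_vertices_def PL_vertices_def)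
        thus "A \<in> F ` SPL_vertices n" using F_L[OF aI] ra by force
      qed
    qed
  qed
next
  fix C D assume C: "C \<in> SPL_vertices n" and D: "D \<in> SPL_vertices n"
  then obtain a b where ab: "a \<in> PL_vertices n" "b \<in> PL_vertices n" "C = Lclass n a" "D = Lclass n b"
    by (auto simp: SPL_vertices_def)
  have aI: "a \<in> IS n" and bI: "b \<in> IS n" using ab by (auto simp: PL_vertices_def)
  show "SPL_adj n C D = Int_adj (F C) (F D)"
  proof
    assume "SPL_adj n C D"
    then obtain a' b' where h: "C \<noteq> D" "a' \<in> PL_vertices n" "b' \<in> PL_vertices n"
      "C = Lclass n a'" "D = Lclass n b'" "PL_adj n a' b'"
      by (auto simp: SPL_adj_def)
    have "a' \<in> IS n" "b' \<in> IS n" using h by (auto simp: PL_vertices_def)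
    thus "Int_adj (F C) (F D)" using h PL_adj_char F_L L_eq by (auto simp: Int_adj_def)
  next
    assume "Int_adj (F C) (F D)"
    hence r: "ran a \<noteq> ran b" "ran a \<inter> ran b \<noteq> {}" using ab aI bI F_L by (auto simp: Int_adj_def)
    hence "PL_adj n a b" using PL_adj_char[OF aI bI] by auto
    moreover have "C \<noteq> D" using r ab L_eq[OF aI bI] by simp
    ultimately show "SPL_adj n C D" using ab unfolding SPL_adj_def by blast
  qed
qed

end
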